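(* Let $q\in K_+$ and let $m$ be an irreducible Metzler $n\times n$ matrix. Define $l(x)=\dfrac{\langle q,mx\rangle}{\langle q,x\rangle}$ for $x\in K_+$. Then $l$ is Lipschitz continuous from $(K_+,d)$ to $(\mathbb R,|\cdot|)$, where $d$ is Hilbert's projective metric, with Lipschitz constant satisfying \[ \mathrm{Lip}\,l\le \sup_{x\in K_0}\inf_{a\in\mathbb R}\frac{\langle q,|m-a\,\mathrm{id}|\,x\rangle}{\langle q,x\rangle}. \]
   Context: A matrix is Metzler if its off-diagonal entries are nonnegative; it is irreducible if for every partition $\{1,\dots,n\}=I\sqcup J$ into nonempty sets some $m_{ij}$ with $i\in I$, $j\in J$ is positive. $K$ is the nonnegative orthant, $K_+$ the positive orthant, $K_0=K\setminus\{0\}$. Hilbert's projective metric on $K_+$ is $d(x,y)=\log\max_{1\le i,j\le n}\frac{x_iy_j}{x_jy_i}$. For a matrix $m=(m_{ij})$, $|m|=(|m_{ij}|)$ denotes the entrywise absolute value. *)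

theory Defs
  imports "HOL-Analysis.Analysis"
begin

definition metzler :: "real^'n^'n \<Rightarrow> bool" where
  "metzler m \<longleftrightarrow> (\<forall>i j. i \<noteq> j \<longrightarrow> m $ i $ j \<ge> 0)"

definition irreducible_mat :: "real^'n^'n \<Rightarrow> bool" where
  "irreducible_mat m \<longleftrightarrow>
     (\<forall>I J. I \<noteq> {} \<longrightarrow> J \<noteq> {} \<longrightarrow> I \<inter> J = {} \<longrightarrow> I \<union> J = UNIV \<longrightarrow>
        (\<exists>i\<in>I. \<exists>j\<in>J. m $ i $ j > 0))"

definition pos_orthant :: "(real^'n) set" where
  "pos_orthant = {x. \<forall>i. x $ i > 0}"

definition nonneg_orthant0 :: "(real^'n) set" where
  "nonneg_orthant0 = {x. (\<forall>i. x $ i \<ge> 0) \<and> x \<noteq> 0}"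

definition hilbert_metric :: "real^'n \<Rightarrow> real^'n \<Rightarrow> real" where
  "hilbert_metric x y = ln (Max {x $ i * y $ j / (x $ j * y $ i) | i j. True})"

definition mat_abs :: "real^'n^'m \<Rightarrow> real^'n^'m" where
  "mat_abs m = (\<chi> i j. \<bar>m $ i $ j\<bar>)"

end

theory Submission
  imports Defs
begin

lemma inner_mv_sum: "q \<bullet> (A *v w) = (\<Sum>i\<in>UNIV. \<Sum>j\<in>UNIV. q$i * A$i$j * w$j)"
  for q w :: "real^'n" and A :: "real^'n^'n"
  by (simp add: inner_vec_def matrix_vector_mult_def sum_distrib_left mult.assoc)

lemma key1:
  fixes q z w :: "real^'n" and M :: "real^'n^'n"
  assumes q: "\<forall>i. q$i \<ge> 0" and w: "\<forall>j. \<bar>w$j\<bar> \<le> r * z$j"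
  shows "\<bar>q \<bullet> (M *v w)\<bar> \<le> r * (q \<bullet> (mat_abs M *v z))"
proof -
  have "\<bar>q \<bullet> (M *v w)\<bar> \<le> (\<Sum>i\<in>UNIV. \<bar>\<Sum>j\<in>UNIV. q$i * M$i$j * w$j\<bar>)"
    unfolding inner_mv_sum by (rule sum_abs)
  also have "\<dots> \<le> (\<Sum>i\<in>UNIV. \<Sum>j\<in>UNIV. \<bar>q$i * M$i$j * w$j\<bar>)"
    by (intro sum_mono sum_abs)
  also have "\<dots> \<le> (\<Sum>i\<in>UNIV. \<Sum>j\<in>UNIV. r * (q$i * \<bar>M$i$j\<bar> * z$j))"
  proof (intro sum_mono)
    fix i j
    have "\<bar>q$i * M$i$j * w$j\<bar> = (q$i * \<bar>M$i$j\<bar>) * \<bar>w$j\<bar>"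
      using q by (simp add: abs_mult)
    also have "\<dots> \<le> (q$i * \<bar>M$i$j\<bar>) * (r * z$j)"
      using q w by (intro mult_left_mono) auto
    finally show "\<bar>q$i * M$i$j * w$j\<bar> \<le> r * (q$i * \<bar>M$i$j\<bar> * z$j)" by (simp add: algebra_simps)
  qed
  also have "\<dots> = r * (q \<bullet> (mat_abs M *v z))"
    unfolding inner_mv_sum by (simp add: mat_abs_def sum_distrib_left)
  finally show ?thesis .
qed

lemma key2:
  fixes q z w :: "real^'n"
  assumes q: "\<forall>i. q$i \<ge> 0" and w: "\<forall>j. \<bar>w$j\<bar> \<le> r * z$j"
  shows "\<bar>q \<bullet> w\<bar> \<le> r * (q \<bullet> z)"
proof -
  have "\<bar>q \<bullet> w\<bar> \<le> (\<Sum>i\<in>UNIV. \<bar>q$i * w$i\<bar>)"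
    unfolding inner_vec_def by (simp add: sum_abs)
  also have "\<dots> \<le> (\<Sum>i\<in>UNIV. r * (q$i * z$i))"
  proof (intro sum_mono)
    fix i
    have "\<bar>q$i * w$i\<bar> = q$i * \<bar>w$i\<bar>" using q by (simp add: abs_mult)
    also have "\<dots> \<le> q$i * (r * z$i)" using q w by (intro mult_left_mono) auto
    finally show "\<bar>q$i * w$i\<bar> \<le> r * (q$i * z$i)" by (simp add: algebra_simps)
  qed
  also have "\<dots> = r * (q \<bullet> z)" by (simp add: inner_vec_def sum_distrib_left)
  finally show ?thesis .
qed

lemma absM_nonneg:
  fixes q z :: "real^'n" and M :: "real^'n^'n"
  assumes q: "\<forall>i. q$i \<ge> 0" and z: "\<forall>j. z$j \<ge> 0"
  shows "0 \<le> q \<bullet> (mat_abs M *v z)"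
  unfolding inner_mv_sum using q z by (auto simp: mat_abs_def intro!: sum_nonneg)

lemma shift:
  fixes q z w :: "real^'n" and m :: "real^'n^'n"
  shows "(q \<bullet> (m *v w)) * (q \<bullet> z) - (q \<bullet> (m *v z)) * (q \<bullet> w)
       = (q \<bullet> ((m - a *\<^sub>R mat 1) *v w)) * (q \<bullet> z) - (q \<bullet> ((m - a *\<^sub>R mat 1) *v z)) * (q \<bullet> w)"
proof -
  have e: "(m - a *\<^sub>R mat 1) *v v = m *v v - a *\<^sub>R v" for v :: "real^'n"
    by (simp add: matrix_vector_mult_diff_rdistrib flip: scaleR_matrix_vector_assoc)
  show ?thesis unfolding e by (simp add: inner_diff_right algebra_simps)
qed

lemma shiftc:
  fixes q z w :: "real^'n" and m :: "real^'n^'n"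
  shows "(q \<bullet> (m *v w)) * (q \<bullet> z) - (q \<bullet> (m *v z)) * (q \<bullet> w)
       = (q \<bullet> (m *v (w - c *\<^sub>R z))) * (q \<bullet> z) - (q \<bullet> (m *v z)) * (q \<bullet> (w - c *\<^sub>R z))"
  by (simp add: matrix_vector_mult_diff_distrib inner_diff_right algebra_simps
      flip: matrix_scaleR_vector_ac)

lemma num_bound:
  fixes q z w :: "real^'n" and m :: "real^'n^'n"
  assumes q: "\<forall>i. q$i \<ge> 0" and z: "\<forall>j. z$j \<ge> 0" and w: "\<forall>j. \<bar>w$j\<bar> \<le> r * z$j"
    and r: "r \<ge> 0"
  shows "\<bar>(q \<bullet> (m *v w)) * (q \<bullet> z) - (q \<bullet> (m *v z)) * (q \<bullet> w)\<bar>
     \<le> 2 * r * (q \<bullet> (mat_abs (m - a *\<^sub>R mat 1) *v z)) * (q \<bullet> z)"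
proof -
  let ?M = "m - a *\<^sub>R mat 1"
  let ?P = "q \<bullet> (mat_abs ?M *v z)"
  have P0: "0 \<le> ?P" by (rule absM_nonneg[OF q z])
  have qz0: "0 \<le> q \<bullet> z" unfolding inner_vec_def using q z by (auto intro!: sum_nonneg)
  have b1: "\<bar>q \<bullet> (?M *v w)\<bar> \<le> r * ?P" by (rule key1[OF q w])
  have b2: "\<bar>q \<bullet> w\<bar> \<le> r * (q \<bullet> z)" by (rule key2[OF q w])
  have b3: "\<bar>q \<bullet> (?M *v z)\<bar> \<le> 1 * ?P" by (rule key1[OF q]) (use z in auto)
  have "\<bar>(q \<bullet> (?M *v w)) * (q \<bullet> z) - (q \<bullet> (?M *v z)) * (q \<bullet> w)\<bar>
      \<le> \<bar>q \<bullet> (?M *v w)\<bar> * (q \<bullet> z) + \<bar>q \<bullet> (?M *v z)\<bar> * \<bar>q \<bullet> w\<bar>"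
    using qz0 abs_triangle_ineq4[of "(q \<bullet> (?M *v w)) * (q \<bullet> z)" "(q \<bullet> (?M *v z)) * (q \<bullet> w)"]
    by (simp add: abs_mult)
  also have "\<dots> \<le> (r * ?P) * (q \<bullet> z) + ?P * (r * (q \<bullet> z))"
    using b1 b2 b3 qz0 P0 r by (intro add_mono mult_mono) auto
  finally show ?thesis unfolding shift[of q m w z a] by (simp add: algebra_simps)
qed

theorem lemma1:
  fixes q :: "real^'n" and m :: "real^'n^'n"
  assumes "q \<in> pos_orthant" and "metzler m" and "irreducible_mat m"
  defines "l \<equiv> (\<lambda>x. (q \<bullet> (m *v x)) / (q \<bullet> x))"
    and "C \<equiv> (SUP x\<in>nonneg_orthant0. INF a\<in>(UNIV::real set).
                 (q \<bullet> (mat_abs (m - a *\<^sub>R mat 1) *v x)) / (q \<bullet> x))"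
  shows "bdd_above ((\<lambda>x. INF a\<in>(UNIV::real set).
                 (q \<bullet> (mat_abs (m - a *\<^sub>R mat 1) *v x)) / (q \<bullet> x)) ` nonneg_orthant0)
    \<and> (\<forall>x\<in>pos_orthant. \<forall>y\<in>pos_orthant. \<bar>l x - l y\<bar> \<le> C * hilbert_metric x y)"
proof -
  have qpos: "\<forall>i. q$i > 0" using assms(1) by (simp add: pos_orthant_def)
  hence qnn: "\<forall>i. q$i \<ge> 0" by (simp add: less_imp_le)
  define F where "F = (\<lambda>a (x::real^'n). (q \<bullet> (mat_abs (m - a *\<^sub>R mat 1) *v x)) / (q \<bullet> x))"
  have qx_pos: "q \<bullet> x > 0" if "x \<in> nonneg_orthant0" for x
  proof -
    from that have xnn: "\<forall>i. x$i \<ge> 0" and "x \<noteq> 0" by (auto simp: nonneg_orthant0_def)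
    then obtain k where "x$k \<noteq> 0" by (auto simp: vec_eq_iff)
    with xnn have xk: "x$k > 0" by (simp add: order_less_le)
    have "q$k * x$k \<le> (\<Sum>i\<in>UNIV. q$i * x$i)"
      by (rule member_le_sum) (use qnn xnn in auto)
    moreover have "q$k * x$k > 0" using qpos xk by simp
    ultimately show ?thesis by (simp add: inner_vec_def)
  qed
  have F_nn: "F a x \<ge> 0" if "x \<in> nonneg_orthant0" for a x
    using qx_pos[OF that] absM_nonneg[OF qnn, of x] that
    by (auto simp: F_def nonneg_orthant0_def)
  have INF_le: "(INF a\<in>(UNIV::real set). F a x) \<le> F b x" if "x \<in> nonneg_orthant0" for b x
    by (rule cINF_lower) (use F_nn[OF that] in \<open>auto intro!: bdd_belowI\<close>)
  define cj where "cj = (\<lambda>j. \<Sum>i\<in>UNIV. q$i * \<bar>m$i$j\<bar>)"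
  define K where "K = Max (range (\<lambda>j. cj j / q$j))"
  have cjK: "cj j \<le> K * q$j" for j
  proof -
    have "cj j / q$j \<le> K" unfolding K_def by (rule Max_ge) auto
    thus ?thesis using qpos by (simp add: divide_le_eq)
  qed
  have F0K: "F 0 x \<le> K" if "x \<in> nonneg_orthant0" for x
  proof -
    have xnn: "\<forall>i. x$i \<ge> 0" using that by (auto simp: nonneg_orthant0_def)
    have "q \<bullet> (mat_abs m *v x) = (\<Sum>j\<in>UNIV. cj j * x$j)"
      unfolding inner_mv_sum cj_def mat_abs_def
      by (subst sum.swap) (simp add: sum_distrib_right)
    also have "\<dots> \<le> (\<Sum>j\<in>UNIV. K * q$j * x$j)"
      using cjK xnn by (intro sum_mono mult_right_mono) auto
    also have "\<dots> = K * (q \<bullet> x)" by (simp add: inner_vec_def sum_distrib_left mult.assoc)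
    finally show ?thesis using qx_pos[OF that] by (simp add: F_def divide_le_eq)
  qed
  have bdd: "bdd_above ((\<lambda>x. INF a\<in>(UNIV::real set). F a x) ` nonneg_orthant0)"
  proof (rule bdd_aboveI)
    fix t assume "t \<in> (\<lambda>x. INF a\<in>(UNIV::real set). F a x) ` nonneg_orthant0"
    then obtain x where x: "x \<in> nonneg_orthant0" and t: "t = (INF a\<in>(UNIV::real set). F a x)" by blast
    show "t \<le> K" using INF_le[OF x, of 0] F0K[OF x] t by simp
  qed
  have C_eq: "C = (SUP x\<in>nonneg_orthant0. INF a\<in>(UNIV::real set). F a x)"
    unfolding C_def F_def ..
  have FC: "F a x \<ge> t" if "x \<in> nonneg_orthant0" "\<And>a. t \<le> F a x" for a x t
    using that by simp
  have leC: "t \<le> C" if x: "x \<in> nonneg_orthant0" and t: "\<And>a. t \<le> F a x" for x t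
  proof -
    have "t \<le> (INF a\<in>(UNIV::real set). F a x)" by (rule cINF_greatest) (use t in auto)
    also have "\<dots> \<le> C" unfolding C_eq by (rule cSUP_upper[OF x bdd])
    finally show ?thesis .
  qed
  have lip: "\<bar>l x - l y\<bar> \<le> C * hilbert_metric x y" if x: "x \<in> pos_orthant" and y: "y \<in> pos_orthant" for x y
  proof -
    have xp: "\<forall>i. x$i > 0" and yp: "\<forall>i. y$i > 0" using x y by (auto simp: pos_orthant_def)
    define d where "d = hilbert_metric x y"
    define u :: "real^'n" where "u = (\<chi> i. ln (x$i / y$i))"
    define umax where "umax = Max (range (\<lambda>i. u$i))"
    define umin where "umin = Min (range (\<lambda>i. u$i))"
    have "umax \<in> range (\<lambda>i. u$i)" unfolding umax_def by (rule Max_in) auto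
    then obtain i1 where i1: "u$i1 = umax" by auto
    have "umin \<in> range (\<lambda>i. u$i)" unfolding umin_def by (rule Min_in) auto
    then obtain j1 where j1: "u$j1 = umin" by auto
    have urange: "umin \<le> u$j \<and> u$j \<le> umax" for j
      unfolding umin_def umax_def by (auto intro: Min_le Max_ge)
    define S where "S = {x $ i * y $ j / (x $ j * y $ i) | i j. True}"
    have finS: "finite S"
    proof (rule finite_subset)
      show "S \<subseteq> (\<lambda>p. x $ fst p * y $ snd p / (x $ snd p * y $ fst p)) ` UNIV"
      unfolding S_def by (auto intro!: image_eqI[where x="(i, j)" for i j])
    qed simp
    have elem: "x $ i1 * y $ j1 / (x $ j1 * y $ i1) \<in> S" unfolding S_def by blast
    have epos: "x $ i1 * y $ j1 / (x $ j1 * y $ i1) > 0" using xp yp by simp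
    have emax: "x $ i1 * y $ j1 / (x $ j1 * y $ i1) \<le> Max S" by (rule Max_ge[OF finS elem])
    have "umax - umin = ln (x$i1 / y$i1) - ln (x$j1 / y$j1)"
      using i1 j1 by (simp add: u_def)
    also have "\<dots> = ln ((x$i1 / y$i1) / (x$j1 / y$j1))"
      by (rule ln_divide_pos[symmetric]) (use xp yp in auto)
    also have "(x$i1 / y$i1) / (x$j1 / y$j1) = x $ i1 * y $ j1 / (x $ j1 * y $ i1)"
      using xp yp by (simp add: field_simps)
    also have "ln \<dots> \<le> ln (Max S)" using epos emax by simp
    finally have ud: "umax - umin \<le> d" by (simp add: d_def hilbert_metric_def S_def)
    have umm: "umin \<le> umax" using urange[of i1] by simp
    hence d0: "d \<ge> 0" using ud by simp
    define c where "c = (umax + umin) / 2"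
    have uc: "\<bar>u$j - c\<bar> \<le> d / 2" for j using urange[of j] ud unfolding c_def abs_le_iff by (auto simp: field_simps)
    define z :: "real \<Rightarrow> real^'n" where "z = (\<lambda>t. \<chi> i. y$i * exp (t * u$i))"
    define zu :: "real \<Rightarrow> real^'n" where "zu = (\<lambda>t. \<chi> i. y$i * u$i * exp (t * u$i))"
    define N where "N = (\<lambda>t. q \<bullet> (m *v z t))"
    define D where "D = (\<lambda>t. q \<bullet> z t)"
    define N' where "N' = (\<lambda>t. q \<bullet> (m *v zu t))"
    define D' where "D' = (\<lambda>t. q \<bullet> zu t)"
    have zpos: "\<forall>i. z t $ i > 0" for t using yp by (simp add: z_def)
    have zno: "z t \<in> nonneg_orthant0" for t
    proof -
      have "z t $ undefined \<noteq> 0" using zpos[of t] by (metis less_irrefl)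
      hence "z t \<noteq> 0" by auto
      thus ?thesis using zpos[of t] by (auto simp: nonneg_orthant0_def less_imp_le)
    qed
    have Dpos: "D t > 0" for t unfolding D_def by (rule qx_pos[OF zno])
    have dN: "(N has_real_derivative N' t) (at t)" for t
    proof -
      have "((\<lambda>t. \<Sum>i\<in>UNIV. \<Sum>j\<in>UNIV. q$i * m$i$j * (y$j * exp (t * u$j))) has_real_derivative
             (\<Sum>i\<in>UNIV. \<Sum>j\<in>UNIV. q$i * m$i$j * (y$j * u$j * exp (t * u$j)))) (at t)"
        by (auto intro!: derivative_eq_intros sum.cong simp: algebra_simps)
      thus ?thesis unfolding N_def N'_def inner_mv_sum z_def zu_def by simp
    qed
    have dD: "(D has_real_derivative D' t) (at t)" for t
    proof -
      have "((\<lambda>t. \<Sum>i\<in>UNIV. q$i * (y$i * exp (t * u$i))) has_real_derivative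
             (\<Sum>i\<in>UNIV. q$i * (y$i * u$i * exp (t * u$i)))) (at t)"
        by (auto intro!: derivative_eq_intros sum.cong simp: algebra_simps)
      thus ?thesis unfolding D_def D'_def inner_vec_def z_def zu_def by simp
    qed
    define g where "g = (\<lambda>t. N t / D t)"
    define g' where "g' = (\<lambda>t. (N' t * D t - N t * D' t) / (D t * D t))"
    have dg: "(g has_real_derivative g' t) (at t)" for t
      unfolding g_def g'_def by (rule DERIV_divide[OF dN dD]) (use Dpos[of t] in simp)
    obtain \<xi> where "g 1 - g 0 = (1 - 0) * g' \<xi>"
      using MVT2[of 0 1 g g'] dg by auto
    hence gdiff: "g 1 - g 0 = g' \<xi>" by simp
    have z1: "z 1 = x" using xp yp by (simp add: z_def u_def vec_eq_iff) (metis less_irrefl)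
    have z0: "z 0 = y" by (simp add: z_def vec_eq_iff)
    have g1: "g 1 = l x" and g0: "g 0 = l y"
      using z1 z0 by (simp_all add: g_def N_def D_def l_def)
    define w where "w = zu \<xi> - c *\<^sub>R z \<xi>"
    have wb: "\<forall>j. \<bar>w$j\<bar> \<le> (d/2) * z \<xi> $ j"
    proof
      fix j
      have "w$j = z \<xi> $ j * (u$j - c)" by (simp add: w_def z_def zu_def algebra_simps)
      hence "\<bar>w$j\<bar> = z \<xi> $ j * \<bar>u$j - c\<bar>"
        using zpos[of \<xi>] by (simp add: abs_mult less_imp_le)
      also have "\<dots> \<le> z \<xi> $ j * (d/2)" using uc[of j] zpos[of \<xi>] by (intro mult_left_mono) (auto simp: less_imp_le)
      finally show "\<bar>w$j\<bar> \<le> (d/2) * z \<xi> $ j" by (simp add: mult.commute)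
    qed
    have numeq: "N' \<xi> * D \<xi> - N \<xi> * D' \<xi>
        = (q \<bullet> (m *v w)) * (q \<bullet> z \<xi>) - (q \<bullet> (m *v z \<xi>)) * (q \<bullet> w)"
      unfolding N_def D_def N'_def D'_def w_def by (rule shiftc)
    have gb: "\<bar>g' \<xi>\<bar> \<le> d * F a (z \<xi>)" for a
    proof -
      have "\<bar>N' \<xi> * D \<xi> - N \<xi> * D' \<xi>\<bar> \<le> 2 * (d/2) * (q \<bullet> (mat_abs (m - a *\<^sub>R mat 1) *v z \<xi>)) * (q \<bullet> z \<xi>)"
        unfolding numeq
        by (rule num_bound[OF qnn _ wb]) (use zpos[of \<xi>] d0 in \<open>auto simp: less_imp_le\<close>)
      hence "\<bar>N' \<xi> * D \<xi> - N \<xi> * D' \<xi>\<bar> / (D \<xi> * D \<xi>) \<le> d * F a (z \<xi>)"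
        using Dpos[of \<xi>] by (simp add: F_def D_def divide_le_eq)
      thus ?thesis using Dpos[of \<xi>] by (simp add: g'_def abs_mult)
    qed
    have "\<bar>g' \<xi>\<bar> \<le> d * C"
    proof (cases "d = 0")
      case True thus ?thesis using gb[of 0] by simp
    next
      case False
      hence dp: "d > 0" using d0 by simp
      have "\<bar>g' \<xi>\<bar> / d \<le> C"
        by (rule leC[OF zno]) (use gb dp in \<open>simp add: divide_le_eq mult.commute\<close>)
      thus ?thesis using dp by (simp add: divide_le_eq mult.commute)
    qed
    thus ?thesis using gdiff g1 g0 by (simp add: d_def mult.commute)
  qed

  show ?thesis using bdd lip unfolding F_def by blast
qed

end
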